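(* Let $E=(E^0,E^1,r,s)$ be a graph with no cycles and no line points. Then for any vertex $v\in E^0$ and any infinite path $\alpha=f_1f_2\cdots$ in $E$ there exists a finite path $\mu=e_1\cdots e_n$ (with $n\ge1$) such that $s(e_1)=v$ and $e_n\neq f_i$ for all $i\in\mathbb{N}$.
   Context: A graph $E=(E^0,E^1,r,s)$ has vertex set $E^0$, edge set $E^1$, range and source maps. A finite path of positive length is $e_1\cdots e_n$ with $r(e_i)=s(e_{i+1})$; an infinite path is $f_1f_2\cdots$ with $r(f_i)=s(f_{i+1})$. A cycle is a finite path $e_1\cdots e_n$ ($n\ge1$) with $s(e_1)=r(e_n)$. For $v\in E^0$, $T(v)$ is the set of vertices $w$ such that there is a path from $v$ to $w$ (including $v$). A bifurcation vertex is one emitting at least two edges. $v$ is a line point if $T(v)$ contains no bifurcation vertex and no vertex of $T(v)$ lies on a cycle (in particular, every sink is a line point). *)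

theory Defs
  imports Main
begin

definition graph :: "'v set \<Rightarrow> 'e set \<Rightarrow> ('e \<Rightarrow> 'v) \<Rightarrow> ('e \<Rightarrow> 'v) \<Rightarrow> bool" where
  "graph V Ed r s \<longleftrightarrow> (\<forall>e\<in>Ed. r e \<in> V \<and> s e \<in> V)"

definition fin_path :: "'e set \<Rightarrow> ('e \<Rightarrow> 'v) \<Rightarrow> ('e \<Rightarrow> 'v) \<Rightarrow> 'e list \<Rightarrow> bool" where
  "fin_path Ed r s \<mu> \<longleftrightarrow> \<mu> \<noteq> [] \<and> set \<mu> \<subseteq> Ed \<and>
     (\<forall>i. Suc i < length \<mu> \<longrightarrow> r (\<mu> ! i) = s (\<mu> ! Suc i))"

text \<open>Infinite path f_1 f_2 ... (indexed from 0 here).\<close>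
definition inf_path :: "'e set \<Rightarrow> ('e \<Rightarrow> 'v) \<Rightarrow> ('e \<Rightarrow> 'v) \<Rightarrow> (nat \<Rightarrow> 'e) \<Rightarrow> bool" where
  "inf_path Ed r s f \<longleftrightarrow> (\<forall>i. f i \<in> Ed) \<and> (\<forall>i. r (f i) = s (f (Suc i)))"

definition is_cycle :: "'e set \<Rightarrow> ('e \<Rightarrow> 'v) \<Rightarrow> ('e \<Rightarrow> 'v) \<Rightarrow> 'e list \<Rightarrow> bool" where
  "is_cycle Ed r s \<mu> \<longleftrightarrow> fin_path Ed r s \<mu> \<and> s (hd \<mu>) = r (last \<mu>)"

definition Tset :: "'e set \<Rightarrow> ('e \<Rightarrow> 'v) \<Rightarrow> ('e \<Rightarrow> 'v) \<Rightarrow> 'v \<Rightarrow> 'v set" where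
  "Tset Ed r s v = insert v {w. \<exists>\<mu>. fin_path Ed r s \<mu> \<and> s (hd \<mu>) = v \<and> r (last \<mu>) = w}"

definition bifurcation :: "'e set \<Rightarrow> ('e \<Rightarrow> 'v) \<Rightarrow> 'v \<Rightarrow> bool" where
  "bifurcation Ed s v \<longleftrightarrow> (\<exists>e1\<in>Ed. \<exists>e2\<in>Ed. e1 \<noteq> e2 \<and> s e1 = v \<and> s e2 = v)"

definition on_cycle :: "'e set \<Rightarrow> ('e \<Rightarrow> 'v) \<Rightarrow> ('e \<Rightarrow> 'v) \<Rightarrow> 'v \<Rightarrow> bool" where
  "on_cycle Ed r s w \<longleftrightarrow> (\<exists>\<mu>. is_cycle Ed r s \<mu> \<and> (\<exists>e\<in>set \<mu>. s e = w))"

definition line_point :: "'e set \<Rightarrow> ('e \<Rightarrow> 'v) \<Rightarrow> ('e \<Rightarrow> 'v) \<Rightarrow> 'v \<Rightarrow> bool" where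
  "line_point Ed r s v \<longleftrightarrow>
     (\<forall>w\<in>Tset Ed r s v. \<not> bifurcation Ed s w) \<and> (\<forall>w\<in>Tset Ed r s v. \<not> on_cycle Ed r s w)"

end

theory Submission
  imports Defs
begin

lemma cyc_from_inf:
  assumes "inf_path Ed r s \<alpha>" "i < j" "s (\<alpha> i) = s (\<alpha> j)"
  shows "is_cycle Ed r s (map \<alpha> [i..<j])"
proof -
  have hd: "hd (map \<alpha> [i..<j]) = \<alpha> i" using assms(2) by (simp add: hd_map upt_conv_Cons)
  have lst: "last (map \<alpha> [i..<j]) = \<alpha> (j - 1)" using assms(2)
    by (simp add: last_map)
  have rj: "r (\<alpha> (j - 1)) = s (\<alpha> j)" using assms(1,2) unfolding inf_path_def
    by (metis Suc_pred' less_nat_zero_code not_gr_zero)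
  have fp: "fin_path Ed r s (map \<alpha> [i..<j])"
    unfolding fin_path_def using assms(1,2) by (auto simp: inf_path_def nth_append)
  show ?thesis unfolding is_cycle_def using fp hd lst rj assms(3) by simp
qed

lemma path_snoc:
  assumes "fin_path Ed r s \<mu>" "r (last \<mu>) = s e" "e \<in> Ed"
  shows "fin_path Ed r s (\<mu> @ [e])"
  using assms unfolding fin_path_def
  apply (auto simp: nth_append last_conv_nth less_Suc_eq)
  by (metis diff_Suc_Suc minus_nat.diff_0)

theorem lemma4p6:
  fixes V :: "'v set" and Ed :: "'e set" and r s :: "'e \<Rightarrow> 'v"
  assumes "graph V Ed r s"
    and "\<nexists>\<mu>. is_cycle Ed r s \<mu>"
    and "\<forall>v\<in>V. \<not> line_point Ed r s v"
    and "v \<in> V"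
    and "inf_path Ed r s \<alpha>"
  shows "\<exists>\<mu>. fin_path Ed r s \<mu> \<and> s (hd \<mu>) = v \<and> (\<forall>i. last \<mu> \<noteq> \<alpha> i)"
proof (rule ccontr)
  assume H: "\<not> ?thesis"
  have nc: "\<And>w. \<not> on_cycle Ed r s w" using assms(2) unfolding on_cycle_def by blast
  obtain w where wT: "w \<in> Tset Ed r s v" and bw: "bifurcation Ed s w"
    using assms(3,4) nc unfolding line_point_def by blast
  obtain e1 e2 where e: "e1 \<in> Ed" "e2 \<in> Ed" "e1 \<noteq> e2" "s e1 = w" "s e2 = w"
    using bw unfolding bifurcation_def by blast
  have ext: "\<exists>i. e = \<alpha> i" if "e \<in> Ed" "s e = w" for e
  proof (cases "w = v")
    case True
    have "fin_path Ed r s [e]" using that unfolding fin_path_def by auto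
    then show ?thesis using H that True by (metis hd_Cons_tl last_ConsL list.sel(1) list.simps(3))
  next
    case False
    then obtain \<mu> where "fin_path Ed r s \<mu>" "s (hd \<mu>) = v" "r (last \<mu>) = w"
      using wT unfolding Tset_def by blast
    moreover have "fin_path Ed r s (\<mu> @ [e])" using path_snoc calculation that by metis
    moreover have "hd (\<mu> @ [e]) = hd \<mu>" using calculation(1) unfolding fin_path_def by simp
    ultimately show ?thesis using H by (metis last_snoc)
  qed
  obtain i j where ij: "e1 = \<alpha> i" "e2 = \<alpha> j" using ext e by blast
  have "i \<noteq> j" using ij e by auto
  then consider "i < j" | "j < i" by linarith
  then show False
  proof cases
    case 1
    then show ?thesis using cyc_from_inf[OF assms(5) 1] ij e assms(2) by auto
  next
    case 2
    then show ?thesis using cyc_from_inf[OF assms(5) 2] ij e assms(2) by auto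
  qed
qed

end
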